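(* Let $p>q\geq 2$ be relatively prime integers with $p\geq 2q-1$, and let $k>0$ be an integer. Then there exists a finite union of intervals $I\subseteq[0,1)$ of total length at most $(q/p)^k$ such that $Z_{p/q}(I)\neq\emptyset$.
   Context: For $x\in\mathbb{R}$, $\{x\}=x-\lfloor x\rfloor$ denotes the fractional part. For relatively prime integers $p>q>1$ and $S\subseteq[0,1)$, $Z_{p/q}(S)=\{\xi>0 \mid \{\xi (p/q)^i\}\in S \text{ for every } i\in\mathbb{N}\}$, where $\mathbb{N}=\{0,1,2,\dots\}$. *)

theory Defs
  imports "HOL-Analysis.Analysis"
begin

definition frac_part :: "real \<Rightarrow> real" where
  "frac_part x = x - real_of_int \<lfloor>x\<rfloor>"

definition Z_set :: "int \<Rightarrow> int \<Rightarrow> real set \<Rightarrow> real set" where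
  "Z_set p q S = {\<xi>. \<xi> > 0 \<and> (\<forall>i::nat. frac_part (\<xi> * (real_of_int p / real_of_int q) ^ i) \<in> S)}"

definition interval_length :: "real set \<Rightarrow> real" where
  "interval_length J = (if J = {} then 0 else Sup J - Inf J)"

end

theory Submission
  imports Defs
begin

fun Mseq :: "int \<Rightarrow> int \<Rightarrow> nat \<Rightarrow> int" where
  "Mseq p q 0 = 1"
| "Mseq p q (Suc n) = (p * Mseq p q n + q - 1) div q"

definition dig :: "int \<Rightarrow> int \<Rightarrow> nat \<Rightarrow> int" where
  "dig p q n = q * Mseq p q (Suc n) - p * Mseq p q n"

lemma dig_bounds:
  assumes "q > 0"
  shows "0 \<le> dig p q n \<and> dig p q n \<le> q - 1"
proof -
  define t where "t = p * Mseq p q n + q - 1"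
  have e: "q * (t div q) = t - t mod q"
    by (simp add: minus_mod_eq_mult_div)
  have "dig p q n = q - 1 - t mod q"
    unfolding dig_def using e by (simp add: t_def)
  moreover have "0 \<le> t mod q" "t mod q < q" using assms by auto
  ultimately show ?thesis by auto
qed

lemma M_rec: "q * Mseq p q (Suc n) = p * Mseq p q n + dig p q n"
  by (simp add: dig_def)

lemma M_step_real:
  assumes "q > 0" "p > 0"
  shows "real_of_int (Mseq p q (Suc n)) * (real_of_int q / real_of_int p)
         = real_of_int (Mseq p q n) + real_of_int (dig p q n) / real_of_int p"
proof -
  have "real_of_int q * real_of_int (Mseq p q (Suc n)) = real_of_int p * real_of_int (Mseq p q n) + real_of_int (dig p q n)"
    using M_rec[of q p n] by (metis of_int_add of_int_mult)
  then show ?thesis using assms by (simp add: field_simps)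
qed


lemma M_lower:
  assumes "q > 0" "p > 0"
  shows "real_of_int (Mseq p q n) \<le> real_of_int (Mseq p q (n+m)) * (real_of_int q / real_of_int p) ^ m"
proof (induction m)
  case 0 then show ?case by simp
next
  case (Suc m)
  define r where "r = real_of_int q / real_of_int p"
  define A where "A = real_of_int (Mseq p q (n+m))"
  define B where "B = real_of_int (Mseq p q (Suc (n+m)))"
  define D where "D = real_of_int (dig p q (n+m)) / real_of_int p"
  have st: "B * r = A + D" unfolding A_def B_def D_def r_def using M_step_real[OF assms, of "n+m"] by simp
  have D0: "D \<ge> 0" unfolding D_def using dig_bounds[OF assms(1), of p "n+m"] assms by simp
  have r0: "r \<ge> 0" unfolding r_def using assms by simp
  have "B * r ^ Suc m = (B * r) * r ^ m" by (simp add: mult.assoc mult.commute)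
  also have "\<dots> = (A + D) * r ^ m" using st by simp
  also have "\<dots> \<ge> A * r ^ m" using D0 r0 by (simp add: distrib_right)
  finally have "A * r ^ m \<le> B * r ^ Suc m" .
  then show ?case using Suc unfolding A_def B_def r_def by simp
qed

lemma M_upper:
  assumes "q > 0" "p > q"
  defines "c \<equiv> (real_of_int q - 1) / (real_of_int p - real_of_int q)"
  shows "real_of_int (Mseq p q (n+m)) * (real_of_int q / real_of_int p) ^ m + c * (real_of_int q / real_of_int p) ^ m
          \<le> real_of_int (Mseq p q n) + c"
proof (induction m)
  case 0 then show ?case by simp
next
  case (Suc m)
  have pp: "p > 0" using assms by auto
  define r where "r = real_of_int q / real_of_int p"
  define A where "A = real_of_int (Mseq p q (n+m))"
  define B where "B = real_of_int (Mseq p q (Suc (n+m)))"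
  define D where "D = real_of_int (dig p q (n+m)) / real_of_int p"
  have st: "B * r = A + D" unfolding A_def B_def D_def r_def using M_step_real[OF assms(1) pp, of "n+m"] by simp
  have r0: "r \<ge> 0" unfolding r_def using assms by simp
  have d: "real_of_int (dig p q (n+m)) \<le> real_of_int q - 1"
    using dig_bounds[OF assms(1), of p "n+m"] by simp
  have key: "D + c * r \<le> c"
  proof -
    have "c * (real_of_int p - real_of_int q) = real_of_int q - 1"
      using assms(2) unfolding c_def by simp
    hence "c * r = c - (real_of_int q - 1) / real_of_int p"
      using pp unfolding r_def by (simp add: field_simps)
    moreover have "D \<le> (real_of_int q - 1) / real_of_int p"
      unfolding D_def using d pp by (simp add: divide_right_mono)
    ultimately show ?thesis by linarith
  qed
  have "B * r ^ Suc m + c * r ^ Suc m = (B * r) * r ^ m + (c * r) * r ^ m" by (simp add: mult.assoc mult.commute)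
  also have "\<dots> = A * r ^ m + (D + c * r) * r ^ m" using st by (simp add: distrib_right)
  also have "\<dots> \<le> A * r ^ m + c * r ^ m" using key r0 by (simp add: mult_right_mono)
  finally have "B * r ^ Suc m + c * r ^ Suc m \<le> A * r ^ m + c * r ^ m" .
  then show ?case using Suc unfolding A_def B_def r_def by simp
qed

lemma M_upper1:
  assumes "q > 0" "p > q" "p \<ge> 2 * q - 1"
  shows "real_of_int (Mseq p q (n+m)) * (real_of_int q / real_of_int p) ^ m \<le> real_of_int (Mseq p q n) + 1"
proof -
  define c where "c = (real_of_int q - 1) / (real_of_int p - real_of_int q)"
  have c1: "c \<le> 1" unfolding c_def using assms by (simp add: divide_le_eq)
  have c0: "c \<ge> 0" unfolding c_def using assms by simp
  have "0 \<le> c * (real_of_int q / real_of_int p) ^ m" using c0 assms by simp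
  then show ?thesis using M_upper[OF assms(1,2), of n m] c1 unfolding c_def by linarith
qed

lemma s_mono:
  assumes "q > 0" "p > 0" "m \<le> n"
  shows "real_of_int (Mseq p q m) * (real_of_int q / real_of_int p) ^ m
       \<le> real_of_int (Mseq p q n) * (real_of_int q / real_of_int p) ^ n"
proof -
  define r where "r = real_of_int q / real_of_int p"
  have r0: "r \<ge> 0" unfolding r_def using assms by simp
  have "real_of_int (Mseq p q m) \<le> real_of_int (Mseq p q (m + (n-m))) * r ^ (n-m)"
    using M_lower[OF assms(1,2), of m "n-m"] unfolding r_def by simp
  hence "real_of_int (Mseq p q m) * r ^ m \<le> (real_of_int (Mseq p q n) * r ^ (n-m)) * r ^ m"
    using assms(3) r0 by (simp add: mult_right_mono)
  also have "\<dots> = real_of_int (Mseq p q n) * r ^ n"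
    using assms(3) by (simp add: mult.assoc power_add[symmetric])
  finally show ?thesis unfolding r_def .
qed

lemma Y_bounds:
  assumes "q > 0" "p > q" "p \<ge> 2 * q - 1"
  defines "y \<equiv> (SUP m. real_of_int (Mseq p q m) * (real_of_int q / real_of_int p) ^ m)"
  shows "real_of_int (Mseq p q n) * (real_of_int q / real_of_int p) ^ n \<le> y
       \<and> y \<le> (real_of_int (Mseq p q n) + 1) * (real_of_int q / real_of_int p) ^ n"
proof -
  define r where "r = real_of_int q / real_of_int p"
  define s where "s = (\<lambda>m. real_of_int (Mseq p q m) * r ^ m)"
  have pp: "p > 0" using assms by simp
  have r0: "r \<ge> 0" unfolding r_def using assms by simp
  have ub: "s m \<le> (real_of_int (Mseq p q n) + 1) * r ^ n" for m
  proof (cases "n \<le> m")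
    case True
    have "s m = (real_of_int (Mseq p q (n + (m-n))) * r ^ (m-n)) * r ^ n"
      unfolding s_def using True by (simp add: mult.assoc power_add[symmetric])
    also have "\<dots> \<le> (real_of_int (Mseq p q n) + 1) * r ^ n"
      using M_upper1[OF assms(1,2,3), of n "m-n"] r0 unfolding r_def
      by (intro mult_right_mono) auto
    finally show ?thesis .
  next
    case False
    have "s m \<le> s n" unfolding s_def r_def using s_mono[OF assms(1) pp, of m n] False by simp
    also have "\<dots> \<le> (real_of_int (Mseq p q n) + 1) * r ^ n" unfolding s_def using r0 by (simp add: distrib_right)
    finally show ?thesis .
  qed
  have bdd: "bdd_above (range s)" using ub by (intro bdd_aboveI2) auto
  have yy: "y = Sup (range s)" unfolding y_def s_def r_def by simp
  have "s n \<le> y" unfolding yy using bdd by (simp add: cSUP_upper)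
  moreover have "y \<le> (real_of_int (Mseq p q n) + 1) * r ^ n" unfolding yy
    using ub by (simp add: cSUP_least)
  ultimately show ?thesis unfolding s_def r_def by simp
qed

definition Rsum :: "int \<Rightarrow> int \<Rightarrow> nat \<Rightarrow> nat \<Rightarrow> int" where
  "Rsum p q n j = (\<Sum>i<j. dig p q (n+i) * q ^ i * p ^ (j - 1 - i))"

lemma M_iter: "q ^ j * Mseq p q (n+j) = p ^ j * Mseq p q n + Rsum p q n j"
proof (induction j)
  case 0 then show ?case by (simp add: Rsum_def)
next
  case (Suc j)
  have R: "Rsum p q n (Suc j) = p * Rsum p q n j + dig p q (n+j) * q ^ j"
  proof -
    have "Rsum p q n (Suc j) = (\<Sum>i<j. dig p q (n+i) * q ^ i * p ^ (j - i)) + dig p q (n+j) * q ^ j"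
      unfolding Rsum_def by simp
    also have "(\<Sum>i<j. dig p q (n+i) * q ^ i * p ^ (j - i)) = (\<Sum>i<j. p * (dig p q (n+i) * q ^ i * p ^ (j - 1 - i)))"
    proof (rule sum.cong)
      fix i assume "i \<in> {..<j}"
      then have "j - i = Suc (j - 1 - i)" by auto
      then show "dig p q (n+i) * q ^ i * p ^ (j - i) = p * (dig p q (n+i) * q ^ i * p ^ (j - 1 - i))"
        by (simp add: algebra_simps)
    qed simp
    finally show ?thesis unfolding Rsum_def by (simp add: sum_distrib_left)
  qed
  have "q ^ Suc j * Mseq p q (n + Suc j) = q ^ j * (q * Mseq p q (Suc (n+j)))" by (simp add: algebra_simps)
  also have "\<dots> = q ^ j * (p * Mseq p q (n+j) + dig p q (n+j))" using M_rec[of q p "n+j"] by simp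
  also have "\<dots> = p * (q ^ j * Mseq p q (n+j)) + dig p q (n+j) * q ^ j" by (simp add: algebra_simps)
  also have "\<dots> = p * (p ^ j * Mseq p q n + Rsum p q n j) + dig p q (n+j) * q ^ j" using Suc by simp
  also have "\<dots> = p ^ Suc j * Mseq p q n + Rsum p q n (Suc j)" using R by (simp add: algebra_simps)
  finally show ?case .
qed

lemma M_mod_word:
  assumes "coprime p q" "\<forall>i<K. dig p q (n+i) = dig p q (n'+i)"
  shows "Mseq p q (n+K) mod p ^ K = Mseq p q (n'+K) mod p ^ K"
proof -
  have RR: "Rsum p q n K = Rsum p q n' K" unfolding Rsum_def using assms(2) by (intro sum.cong) auto
  have "q ^ K * (Mseq p q (n+K) - Mseq p q (n'+K)) = p ^ K * (Mseq p q n - Mseq p q n')"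
    using M_iter[of q K p n] M_iter[of q K p n'] RR by (simp add: algebra_simps)
  hence "p ^ K dvd q ^ K * (Mseq p q (n+K) - Mseq p q (n'+K))" by simp
  moreover have "coprime (p ^ K) (q ^ K)" using assms(1) by simp
  ultimately have "p ^ K dvd (Mseq p q (n+K) - Mseq p q (n'+K))"
    using coprime_dvd_mult_right_iff by blast
  then show ?thesis by (simp add: mod_eq_dvd_iff)
qed

lemma card_D:
  assumes "coprime p q" "q > 0"
  shows "finite ((\<lambda>n. Mseq p q n mod p ^ K) ` {K..})
       \<and> card ((\<lambda>n. Mseq p q n mod p ^ K) ` {K..}) \<le> nat q ^ K"
proof -
  define W where "W = PiE {..<K} (\<lambda>_. {0..<q})"
  define g where "g = (\<lambda>n. restrict (\<lambda>i. dig p q (n - K + i)) {..<K})"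
  define f where "f = (\<lambda>n. Mseq p q n mod p ^ K)"
  define h where "h = (\<lambda>w. f (SOME n. n \<in> {K..} \<and> g n = w))"
  have gW: "g ` {K..} \<subseteq> W"
    unfolding W_def g_def using dig_bounds[OF assms(2)] by (intro image_subsetI, subst restrict_PiE_iff) auto
  have finW: "finite W" unfolding W_def by (simp add: finite_PiE)
  have cardW: "card W = nat q ^ K" unfolding W_def by (simp add: card_PiE)
  have fg: "f n = f n'" if "n \<in> {K..}" "n' \<in> {K..}" "g n = g n'" for n n'
  proof -
    have "\<forall>i<K. dig p q ((n-K)+i) = dig p q ((n'-K)+i)"
    proof (intro allI impI)
      fix i assume "i < K"
      then show "dig p q ((n-K)+i) = dig p q ((n'-K)+i)"
        using fun_cong[OF that(3), of i] unfolding g_def by simp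
    qed
    from M_mod_word[OF assms(1) this] that(1,2) show ?thesis unfolding f_def by simp
  qed
  have eq: "f ` {K..} = h ` (g ` {K..})"
  proof
    show "f ` {K..} \<subseteq> h ` (g ` {K..})"
    proof
      fix z assume "z \<in> f ` {K..}"
      then obtain n where n: "n \<in> {K..}" "z = f n" by auto
      define n' where "n' = (SOME n'. n' \<in> {K..} \<and> g n' = g n)"
      have A: "n' \<in> {K..} \<and> g n' = g n" unfolding n'_def
        by (rule someI_ex) (use n(1) in blast)
      have B: "h (g n) = f n'" unfolding h_def n'_def by (rule refl)
      have C: "f n' = f n" using A n(1) by (intro fg) auto
      have G: "g n \<in> g ` {K..}" using n(1) by (rule imageI)
      have "z = h (g n)" using B C n(2) by simp
      thus "z \<in> h ` (g ` {K..})" using G by (rule image_eqI)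
    qed
  next
    show "h ` (g ` {K..}) \<subseteq> f ` {K..}"
    proof
      fix z assume "z \<in> h ` (g ` {K..})"
      then obtain n where n: "n \<in> {K..}" "z = h (g n)" by auto
      define n' where "n' = (SOME n'. n' \<in> {K..} \<and> g n' = g n)"
      have "n' \<in> {K..} \<and> g n' = g n" unfolding n'_def
        by (rule someI_ex) (use n(1) in blast)
      moreover have "z = f n'" unfolding n(2) h_def n'_def by (rule refl)
      ultimately show "z \<in> f ` {K..}" by auto
    qed
  qed
  have fin: "finite (g ` {K..})" using finW gW finite_subset by blast
  have "card (f ` {K..}) \<le> card (g ` {K..})" unfolding eq by (rule card_image_le[OF fin])
  also have "\<dots> \<le> card W" using finW gW by (rule card_mono)
  finally have "card (f ` {K..}) \<le> nat q ^ K" using cardW by simp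
  moreover have "finite (f ` {K..})" unfolding eq using fin by (rule finite_imageI)
  ultimately show ?thesis unfolding f_def by simp
qed

definition cell :: "int \<Rightarrow> nat \<Rightarrow> int \<Rightarrow> real set" where
  "cell p K d = {y. real_of_int d / real_of_int p ^ K \<le> y \<and> y \<le> (real_of_int d + 1) / real_of_int p ^ K \<and> y < 1}"

lemma frac_in_cell:
  fixes z :: real and M Pi :: int
  assumes "Pi > 0" "real_of_int M \<le> real_of_int Pi * z" "real_of_int Pi * z \<le> real_of_int M + 1"
  shows "frac_part z \<in> {y. real_of_int (M mod Pi) / real_of_int Pi \<le> y \<and> y \<le> (real_of_int (M mod Pi) + 1) / real_of_int Pi \<and> y < 1} \<union> {0}"
proof -
  define t where "t = M div Pi"
  define d where "d = M mod Pi"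
  have Md: "M = Pi * t + d" unfolding t_def d_def by simp
  have d0: "0 \<le> d" "d \<le> Pi - 1" unfolding d_def using assms(1) by auto
  define u where "u = z - real_of_int t"
  have Pp: "real_of_int Pi > 0" using assms(1) by simp
  have "real_of_int Pi * u = real_of_int Pi * z - real_of_int Pi * real_of_int t" unfolding u_def by (simp add: algebra_simps)
  moreover have "real_of_int M = real_of_int Pi * real_of_int t + real_of_int d" using Md by simp
  ultimately have u1: "real_of_int d \<le> real_of_int Pi * u" "real_of_int Pi * u \<le> real_of_int d + 1"
    using assms(2,3) by linarith+
  have ua: "real_of_int d / real_of_int Pi \<le> u" using u1(1) Pp by (simp add: divide_le_eq mult.commute)
  have ub: "u \<le> (real_of_int d + 1) / real_of_int Pi" using u1(2) Pp by (simp add: le_divide_eq mult.commute)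
  have "real_of_int d + 1 \<le> real_of_int Pi" using d0 by linarith
  hence "(real_of_int d + 1) / real_of_int Pi \<le> 1" using Pp by simp
  hence u_le: "u \<le> 1" using ub by linarith
  have u_ge: "0 \<le> u" using ua d0 Pp by (smt (verit) divide_nonneg_pos of_int_0_le_iff)
  show ?thesis
  proof (cases "u < 1")
    case True
    have "floor z = t" unfolding u_def using True u_ge u_def by (simp add: floor_eq_iff)
    hence "frac_part z = u" unfolding frac_part_def u_def by simp
    thus ?thesis using ua ub True unfolding d_def by simp
  next
    case False
    hence "z = real_of_int (t + 1)" using u_le unfolding u_def by simp
    hence "frac_part z = 0" unfolding frac_part_def by (simp only: floor_of_int)
    thus ?thesis by simp
  qed
qed

lemma cell_props:
  assumes "p > 0" "0 \<le> d" "d < p ^ K"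
  shows "is_interval (cell p K d) \<and> cell p K d \<subseteq> {0..<1} \<and> interval_length (cell p K d) \<le> 1 / real_of_int p ^ K"
proof -
  define P where "P = real_of_int p ^ K"
  have Pp: "P > 0" unfolding P_def using assms by simp
  have dP: "real_of_int d + 1 \<le> P" unfolding P_def using assms(3)
    by (metis of_int_add of_int_le_iff of_int_power of_int_1 zless_imp_add1_zle)
  have ce: "cell p K d = {y. real_of_int d / P \<le> y \<and> y \<le> (real_of_int d + 1) / P \<and> y < 1}"
    unfolding cell_def P_def by simp
  have iv: "is_interval (cell p K d)" unfolding ce is_interval_1 by auto
  have d0: "0 \<le> real_of_int d / P" using assms(2) Pp by simp
  have sub: "cell p K d \<subseteq> {0..<1}" unfolding ce using d0 by auto
  have lt1: "real_of_int d / P < 1" using dP Pp by (simp add: divide_less_eq)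
  have ne: "real_of_int d / P \<in> cell p K d" unfolding ce using lt1 Pp by (simp add: divide_right_mono)
  have s1: "Sup (cell p K d) \<le> (real_of_int d + 1) / P"
    using ne by (intro cSup_least) (auto simp: ce)
  have i1: "real_of_int d / P \<le> Inf (cell p K d)"
    using ne by (intro cInf_greatest) (auto simp: ce)
  have "interval_length (cell p K d) \<le> (real_of_int d + 1) / P - real_of_int d / P"
    unfolding interval_length_def using ne s1 i1 by auto
  also have "\<dots> = 1 / P" using Pp by (simp add: field_simps)
  finally show ?thesis using iv sub unfolding P_def by simp
qed

theorem theorem2:
  fixes p q k :: int
  assumes "p > q" and "q \<ge> 2" and "coprime p q" and "p \<ge> 2 * q - 1" and "k > 0"
  shows "\<exists>F :: real set set. finite F \<and> (\<forall>J\<in>F. is_interval J \<and> J \<subseteq> {0..<1})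
           \<and> (\<Sum>J\<in>F. interval_length J) \<le> (real_of_int q / real_of_int p) ^ nat k
           \<and> Z_set p q (\<Union>F) \<noteq> {}"
proof -
  define K where "K = nat k"
  have q0: "q > 0" and p0: "p > 0" using assms by auto
  define P where "P = real_of_int p ^ K"
  have Pp: "P > 0" unfolding P_def using p0 by simp
  define r where "r = real_of_int q / real_of_int p"
  have r0: "r > 0" unfolding r_def using p0 q0 by simp
  define y where "y = (SUP m. real_of_int (Mseq p q m) * (real_of_int q / real_of_int p) ^ m)"
  define \<xi> where "\<xi> = y / P"
  define x where "x = (\<lambda>n. \<xi> * (real_of_int p / real_of_int q) ^ n)"
  have yb: "real_of_int (Mseq p q n) * r ^ n \<le> y \<and> y \<le> (real_of_int (Mseq p q n) + 1) * r ^ n" for n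
    using Y_bounds[OF q0 assms(1) assms(4), of n] unfolding y_def r_def by simp
  have Px: "real_of_int (Mseq p q n) \<le> real_of_int (p ^ K) * x n \<and> real_of_int (p ^ K) * x n \<le> real_of_int (Mseq p q n) + 1" for n
  proof -
    have rn: "r ^ n > 0" using r0 by simp
    have "real_of_int (p ^ K) * x n = y / r ^ n"
      unfolding x_def \<xi>_def P_def r_def using p0 q0 by (simp add: power_divide)
    thus ?thesis using yb[of n] rn by (simp add: le_divide_eq divide_le_eq)
  qed
  have ypos: "y > 0" using yb[of 0] by simp
  define D where "D = (\<lambda>n. Mseq p q n mod p ^ K) ` {K..}"
  have cD: "finite D \<and> card D \<le> nat q ^ K" unfolding D_def using card_D[OF assms(3) q0] by simp
  define Z where "Z = insert {0} ((\<lambda>n. {frac_part (x n)}) ` {..<K})"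
  define F where "F = cell p K ` D \<union> Z"
  have Dr: "0 \<le> d \<and> d < p ^ K" if "d \<in> D" for d
    using that p0 unfolding D_def by auto
  have frac01: "0 \<le> frac_part z \<and> frac_part z < 1" for z
    unfolding frac_part_def by linarith
  have finF: "finite F" unfolding F_def Z_def using cD by simp
  have ivF: "\<forall>J\<in>F. is_interval J \<and> J \<subseteq> {0..<1}"
  proof
    fix J assume "J \<in> F"
    then consider (c) d where "d \<in> D" "J = cell p K d" | (z) "J \<in> Z" unfolding F_def by auto
    then show "is_interval J \<and> J \<subseteq> {0..<1}"
    proof cases
      case c then show ?thesis using cell_props[OF p0, of d K] Dr by auto
    next
      case z then show ?thesis unfolding Z_def using frac01 by (auto simp: is_interval_1)
    qed
  qed
  have Z0: "interval_length J = 0" if "J \<in> Z" for J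
    using that unfolding Z_def interval_length_def by auto
  have sumZ: "(\<Sum>J\<in>Z. interval_length J) = 0" using Z0 by simp
  have finZ: "finite Z" unfolding Z_def by simp
  have finC: "finite (cell p K ` D)" using cD by simp
  have Fsplit: "F = (cell p K ` D - Z) \<union> Z" unfolding F_def by auto
  have "(\<Sum>J\<in>F. interval_length J) = (\<Sum>J\<in>(cell p K ` D - Z). interval_length J) + (\<Sum>J\<in>Z. interval_length J)"
    unfolding Fsplit using finZ finC by (intro sum.union_disjoint) auto
  also have "\<dots> = (\<Sum>J\<in>(cell p K ` D - Z). interval_length J)" using sumZ by simp
  also have "\<dots> \<le> of_nat (card (cell p K ` D - Z)) * (1 / P)"
  proof (rule sum_bounded_above)
    fix J assume "J \<in> cell p K ` D - Z"
    then obtain d where "d \<in> D" "J = cell p K d" by auto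
    then show "interval_length J \<le> 1 / P" using cell_props[OF p0, of d K] Dr unfolding P_def by auto
  qed
  also have "\<dots> \<le> of_nat (nat q ^ K) * (1 / P)"
  proof -
    have "card (cell p K ` D - Z) \<le> card (cell p K ` D)" using finC by (intro card_mono) auto
    also have "\<dots> \<le> card D" using cD by (intro card_image_le) auto
    also have "\<dots> \<le> nat q ^ K" using cD by simp
    finally have "real (card (cell p K ` D - Z)) \<le> real (nat q ^ K)" by linarith
    thus ?thesis using Pp by (intro mult_right_mono) auto
  qed
  also have "\<dots> = (real_of_int q / real_of_int p) ^ nat k"
    unfolding P_def K_def using q0 by (simp add: power_divide)
  finally have sumF: "(\<Sum>J\<in>F. interval_length J) \<le> (real_of_int q / real_of_int p) ^ nat k" .
  have inZ: "\<xi> \<in> Z_set p q (\<Union>F)"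
    unfolding Z_set_def
  proof (intro CollectI conjI allI)
    show "\<xi> > 0" unfolding \<xi>_def using ypos Pp by simp
  next
    fix i :: nat
    show "frac_part (\<xi> * (real_of_int p / real_of_int q) ^ i) \<in> \<Union>F"
    proof (cases "i < K")
      case True
      then have "{frac_part (x i)} \<in> F" unfolding F_def Z_def by auto
      then show ?thesis unfolding x_def by auto
    next
      case False
      have pK: "p ^ K > 0" using p0 by simp
      have m: "frac_part (x i) \<in> {y. real_of_int (Mseq p q i mod p ^ K) / real_of_int (p ^ K) \<le> y \<and> y \<le> (real_of_int (Mseq p q i mod p ^ K) + 1) / real_of_int (p ^ K) \<and> y < 1} \<union> {0}"
        using frac_in_cell[OF pK] Px[of i] by blast
      have dD: "Mseq p q i mod p ^ K \<in> D" unfolding D_def using False by auto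
      have c: "cell p K (Mseq p q i mod p ^ K) \<in> F" unfolding F_def using dD by auto
      have z: "{0} \<in> F" unfolding F_def Z_def by auto
      from m have "frac_part (x i) \<in> cell p K (Mseq p q i mod p ^ K) \<or> frac_part (x i) = 0"
        unfolding cell_def by auto
      then show ?thesis using c z unfolding x_def by auto
    qed
  qed
  show ?thesis using finF ivF sumF inZ by blast
qed

end
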